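(* For $z\in\mathbb{C}$ with $\Re z>-1$, the functions $$u_z(y):=\frac{e^{-zy}-1-z(e^{-y}-1)}{e^{y}-1},\qquad v_z(y):=ze^{-y}-u_z(y)=\frac{1-e^{-zy}}{e^{y}-1}$$ (extended by continuity at $y=0$) are bounded and continuous on $[0,\infty)$. Furthermore, there exist constants $C_{\Re z},C_{1,\Re z},C_{2,\Re z},\epsilon_{1,\Re z},\epsilon_{2,\Re z}>0$, depending only on $\Re z$, such that for all $y\ge0$ and all $x\ge C_{\Re z}$, $$|v_z(y)|\le C_{1,\Re z}\,|z|\,e^{-\epsilon_{1,\Re z}y}\qquad\text{and}\qquad |v_z(x)|\le C_{2,\Re z}\,e^{-\epsilon_{2,\Re z}x}.$$ *)

theory Defs
  imports "HOL-Analysis.Analysis"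
begin

definition u_fun :: "complex \<Rightarrow> real \<Rightarrow> complex" where
  "u_fun z y = (if y = 0 then 0
     else (exp (- (z * of_real y)) - 1 - z * (exp (- of_real y) - 1)) / (exp (of_real y) - 1))"

definition v_fun :: "complex \<Rightarrow> real \<Rightarrow> complex" where
  "v_fun z y = z * exp (- of_real y) - u_fun z y"

end

theory Submission
  imports Defs
begin

lemma mvt_bound:
  fixes z :: complex
  assumes y: "y \<ge> 0" and c: "c \<ge> 0" "- Re z \<le> c"
  shows "norm (1 - exp (- (z * of_real y))) \<le> norm z * exp (c*y) * y"
proof -
  define S where "S = closed_segment 0 (complex_of_real y)"
  have "norm ((\<lambda>w. exp (- (z * w))) (of_real y) - (\<lambda>w. exp (- (z * w))) 0)
        \<le> (norm z * exp (c*y)) * norm (complex_of_real y - 0)"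
  proof (rule field_differentiable_bound[where S=S and f'="\<lambda>w. - z * exp (- (z * w))"])
    show "convex S" unfolding S_def by simp
    fix w assume "w \<in> S"
    show "((\<lambda>w. exp (- (z * w))) has_field_derivative - z * exp (- (z * w))) (at w within S)"
      by (auto intro!: derivative_eq_intros)
    from \<open>w \<in> S\<close> obtain u where u: "0 \<le> u" "u \<le> 1" "w = of_real (u * y)"
      unfolding S_def in_segment by (auto simp: scaleR_conv_of_real)
    have uy: "0 \<le> u * y" "u * y \<le> y" using u y by (auto simp: mult_left_le_one_le)
    have "- Re z * (u*y) \<le> c * (u*y)" using c uy by (intro mult_right_mono) auto
    also have "\<dots> \<le> c * y" using c uy by (intro mult_left_mono) auto
    finally have "exp (- Re z * (u*y)) \<le> exp (c*y)" by simp
    then show "norm (- z * exp (- (z * w))) \<le> norm z * exp (c*y)"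
      using u by (simp add: norm_mult norm_exp_eq_Re mult_left_mono)
  qed (auto simp: S_def)
  then show ?thesis using y by (simp add: norm_minus_commute)
qed

lemma real_bound1:
  fixes y c :: real
  assumes y: "y > 0" and c: "0 \<le> c" "c < 1"
  defines "e1 \<equiv> (1 - c) / 2"
  shows "y * exp (c*y) \<le> (3 + 2/e1) * exp (- e1 * y) * (exp y - 1)"
proof -
  have e1: "e1 > 0" "c + e1 = 1 - e1" "e1 \<le> 1" using c by (auto simp: e1_def field_simps)
  have key: "y * exp ((1-e1)*y) \<le> (3 + 2/e1) * (exp y - 1)"
  proof (cases "y \<le> 1")
    case True
    have "y \<le> exp y - 1" using exp_ge_add_one_self[of y] by linarith
    moreover have "exp ((1-e1)*y) \<le> 3"
    proof -
      have "(1-e1)*y \<le> 1" using True e1 y by (simp add: mult_le_one)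
      then have "exp ((1-e1)*y) \<le> exp 1" by simp
      also have "\<dots> \<le> 3" using exp_le by simp
      finally show ?thesis .
    qed
    ultimately have "y * exp ((1-e1)*y) \<le> (exp y - 1) * 3"
      using y by (intro mult_mono) auto
    also have "\<dots> \<le> (3 + 2/e1) * (exp y - 1)"
      using e1 y by (simp add: field_simps)
    finally show ?thesis .
  next
    case False
    have "e1 * y \<le> exp (e1*y)" using exp_ge_add_one_self[of "e1*y"] by linarith
    then have "y \<le> exp (e1*y) / e1" using e1 by (simp add: field_simps)
    then have "y * exp ((1-e1)*y) \<le> exp (e1*y) / e1 * exp ((1-e1)*y)" by (rule mult_right_mono) auto
    also have "\<dots> = exp y / e1" by (simp add: exp_add[symmetric] algebra_simps)
    also have "\<dots> \<le> 2/e1 * (exp y - 1)"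
    proof -
      have "exp 1 \<le> exp y" using False by simp
      moreover have "2 \<le> exp (1::real)" using exp_ge_add_one_self[of 1] by linarith
      ultimately have "2 \<le> exp y" by (meson order_trans) then have "exp y \<le> 2 * (exp y - 1)" by simp
      then show ?thesis using e1 by (simp add: field_simps)
    qed
    also have "\<dots> \<le> (3 + 2/e1) * (exp y - 1)" using y by (intro mult_right_mono) auto
    finally show ?thesis .
  qed
  have "y * exp (c*y) = (y * exp ((1-e1)*y)) * exp (- e1 * y)"
    by (simp add: mult.assoc exp_add[symmetric] e1(2)[symmetric] algebra_simps)
  also have "\<dots> \<le> ((3 + 2/e1) * (exp y - 1)) * exp (- e1 * y)"
    by (intro mult_right_mono key) auto
  finally show ?thesis by (simp add: algebra_simps)
qed

lemma exp_ofreal_ne1: "y > 0 \<Longrightarrow> exp (complex_of_real y) - 1 \<noteq> 0"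
proof
  assume "y > 0" "exp (complex_of_real y) - 1 = 0"
  then have "exp y = (1::real)" by (metis exp_of_real of_real_eq_1_iff right_minus_eq)
  with \<open>y > 0\<close> show False by simp
qed

lemma v_ident:
  assumes "y > 0"
  shows "v_fun z y = (1 - exp (- (z * of_real y))) / (exp (of_real y) - 1)"
proof -
  have ne: "exp (complex_of_real y) - 1 \<noteq> 0" using exp_ofreal_ne1 assms .
  have ee: "exp (- complex_of_real y) * exp (complex_of_real y) = 1"
    by (simp add: exp_minus)
  have "v_fun z y = z * exp (- of_real y) -
     (exp (- (z * of_real y)) - 1 - z * (exp (- of_real y) - 1)) / (exp (of_real y) - 1)"
    using assms by (simp add: v_fun_def u_fun_def)
  also have "\<dots> = (z * (exp (- of_real y) * exp (complex_of_real y)) - z * exp (- of_real y) -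
     (exp (- (z * of_real y)) - 1 - z * (exp (- of_real y) - 1))) / (exp (of_real y) - 1)"
    using ne by (simp add: field_simps)
  also have "\<dots> = (1 - exp (- (z * of_real y))) / (exp (of_real y) - 1)"
    unfolding ee by (simp add: algebra_simps)
  finally show ?thesis .
qed

lemma norm_den: "y > 0 \<Longrightarrow> norm (exp (complex_of_real y) - 1) = exp y - 1"
proof -
  assume "y > 0"
  have "norm (exp (complex_of_real y) - 1) = norm (complex_of_real (exp y - 1))"
    by (simp add: exp_of_real)
  also have "\<dots> = exp y - 1" using \<open>y > 0\<close> by (simp only: norm_of_real) simp
  finally show ?thesis .
qed

lemma norm_exp_mz: "norm (exp (- (z * complex_of_real t))) = exp (- Re z * t)"
  by (simp add: norm_exp_eq_Re)

lemma part2: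
  fixes a :: real
  assumes a: "a > -1"
  shows "\<exists>C C1 C2 e1 e2 :: real. C > 0 \<and> C1 > 0 \<and> C2 > 0 \<and> e1 > 0 \<and> e2 > 0 \<and>
              (\<forall>z::complex. Re z = a \<longrightarrow>
                 (\<forall>y::real. y \<ge> 0 \<longrightarrow> norm (v_fun z y) \<le> C1 * norm z * exp (- e1 * y))
               \<and> (\<forall>x::real. x \<ge> C \<longrightarrow> norm (v_fun z x) \<le> C2 * exp (- e2 * x)))"
proof -
  define c where "c = max 0 (-a)"
  define e1 where "e1 = (1 - c) / 2"
  define C1 where "C1 = 3 + 2 / e1"
  have c: "0 \<le> c" "c < 1" "-a \<le> c" using a by (auto simp: c_def)
  have e1: "e1 > 0" using c by (simp add: e1_def)
  have C1: "C1 \<ge> 1" using e1 by (simp add: C1_def)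
  have B1: "norm (v_fun z y) \<le> C1 * norm z * exp (- e1 * y)" if z: "Re z = a" and y: "y \<ge> 0" for z y
  proof (cases "y = 0")
    case True
    then show ?thesis using C1 by (simp add: v_fun_def u_fun_def) (simp add: mult_le_cancel_right1)
  next
    case False
    then have y: "y > 0" using y by simp
    have "norm (v_fun z y) = norm (1 - exp (- (z * of_real y))) / (exp y - 1)"
      using v_ident[OF y] norm_den[OF y] by (simp add: norm_divide)
    also have "\<dots> \<le> norm z * exp (c*y) * y / (exp y - 1)"
      using mvt_bound[of y c z] y c z by (intro divide_right_mono) auto
    also have "\<dots> = norm z * (y * exp (c*y) / (exp y - 1))" by simp
    also have "\<dots> \<le> norm z * (C1 * exp (- e1 * y))"
    proof (intro mult_left_mono)
      have "y * exp (c*y) \<le> C1 * exp (- e1 * y) * (exp y - 1)"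
        using real_bound1[OF y c(1,2)] unfolding C1_def e1_def .
      moreover have "exp y - 1 > 0" using y by simp
      ultimately show "y * exp (c*y) / (exp y - 1) \<le> C1 * exp (- e1 * y)"
        by (simp add: divide_le_eq)
    qed simp
    finally show ?thesis by (simp add: algebra_simps)
  qed
  have B2: "norm (v_fun z x) \<le> 4 * exp (- (1 - c) * x)" if z: "Re z = a" and x: "x \<ge> 1" for z x
  proof -
    have x0: "x > 0" using x by simp
    have "norm (1 - exp (- (z * of_real x))) \<le> 1 + exp (- a * x)"
      using norm_triangle_ineq4[of 1 "exp (- (z * of_real x))"] norm_exp_mz[of z x] z by simp
    also have "\<dots> \<le> 2 * exp (c * x)"
    proof -
      have "- a * x \<le> c * x" using c x0 by (intro mult_right_mono) auto
      then have "exp (- a * x) \<le> exp (c * x)" by simp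
      moreover have "1 \<le> exp (c * x)" using c x0 by simp
      ultimately show ?thesis by linarith
    qed
    finally have n1: "norm (1 - exp (- (z * of_real x))) \<le> 2 * exp (c * x)" .
    have ex: "exp x \<le> 2 * (exp x - 1)"
    proof -
      have "exp 1 \<le> exp x" using x by simp
      moreover have "2 \<le> exp (1::real)" using exp_ge_add_one_self[of 1] by linarith
      ultimately have "2 \<le> exp x" by (meson order_trans)
      then show ?thesis by simp
    qed
    have "norm (v_fun z x) = norm (1 - exp (- (z * of_real x))) / (exp x - 1)"
      using v_ident[OF x0] norm_den[OF x0] by (simp add: norm_divide)
    also have "\<dots> \<le> 2 * exp (c * x) / (exp x - 1)"
      using n1 x0 by (intro divide_right_mono) auto
    also have "\<dots> \<le> 2 * exp (c * x) / (exp x / 2)"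
      using ex x0 by (intro divide_left_mono) auto
    also have "\<dots> = 4 * (exp (c * x) / exp x)" by simp
    also have "exp (c * x) / exp x = exp (- (1 - c) * x)"
      by (simp add: exp_diff[symmetric] algebra_simps)
    finally show ?thesis by simp
  qed
  show ?thesis
    apply (rule exI[of _ 1], rule exI[of _ C1], rule exI[of _ 4], rule exI[of _ e1], rule exI[of _ "1 - c"])
    using B1 B2 C1 e1 c by auto
qed

lemma expq_lim: "((\<lambda>h. (exp h - 1) / h) \<longlongrightarrow> (1::complex)) (at 0)"
proof -
  have "((\<lambda>h::complex. exp h) has_field_derivative exp 0) (at 0)" by (rule DERIV_exp)
  then show ?thesis by (simp add: has_field_derivative_iff)
qed

lemma v_lim: fixes z :: complex shows "((\<lambda>y. (1 - exp (- (z * of_real y))) / (exp (of_real y) - 1)) \<longlongrightarrow> z) (at_right (0::real))"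
proof (cases "z = 0")
  case True
  have "(\<lambda>y::real. (1 - exp (- (z * of_real y))) / (exp (of_real y) - 1)) = (\<lambda>_. 0)"
    using True by (auto simp del: exp_of_real)
  then show ?thesis using True by simp
next
  case False
  have f1: "filterlim (\<lambda>y::real. - (z * of_real y)) (at 0) (at_right 0)"
    unfolding filterlim_at
  proof
    show "\<forall>\<^sub>F y in at_right 0. - (z * complex_of_real y) \<in> UNIV \<and> - (z * complex_of_real y) \<noteq> 0"
      using eventually_at_right_less[of 0] by eventually_elim (use False in auto)
    show "((\<lambda>y. - (z * complex_of_real y)) \<longlongrightarrow> 0) (at_right 0)"
      by (auto intro!: tendsto_eq_intros)
  qed
  have f2: "filterlim (\<lambda>y::real. complex_of_real y) (at 0) (at_right 0)"
    unfolding filterlim_at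
  proof
    show "\<forall>\<^sub>F y in at_right 0. complex_of_real y \<in> UNIV \<and> complex_of_real y \<noteq> 0"
      using eventually_at_right_less[of 0] by eventually_elim auto
    show "((\<lambda>y. complex_of_real y) \<longlongrightarrow> 0) (at_right 0)"
      by (auto intro!: tendsto_eq_intros)
  qed
  have l1: "((\<lambda>y. (exp (- (z * of_real y)) - 1) / (- (z * of_real y))) \<longlongrightarrow> 1) (at_right (0::real))"
    using filterlim_compose[OF expq_lim f1] by (simp add: o_def)
  have l2: "((\<lambda>y. (exp (complex_of_real y) - 1) / (complex_of_real y)) \<longlongrightarrow> 1) (at_right (0::real))"
    using filterlim_compose[OF expq_lim f2] by (simp add: o_def)
  have l3: "((\<lambda>y. z * ((exp (- (z * of_real y)) - 1) / (- (z * of_real y))) /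
                  ((exp (of_real y) - 1) / (of_real y))) \<longlongrightarrow> z * 1 / 1) (at_right (0::real))"
    by (intro tendsto_divide tendsto_mult l1 l2 tendsto_const) simp
  show ?thesis
  proof (rule Lim_transform_eventually[OF l3[unfolded mult_1_right div_by_1]])
    show "\<forall>\<^sub>F y in at_right 0. z * ((exp (- (z * of_real y)) - 1) / (- (z * of_real y))) /
                  ((exp (of_real y) - 1) / (of_real y)) =
          (1 - exp (- (z * of_real y))) / (exp (of_real y) - 1)"
      using eventually_at_right_less[of 0]
    proof eventually_elim
      case (elim y)
      then have "exp (complex_of_real y) - 1 \<noteq> 0" "complex_of_real y \<noteq> 0"
        using exp_ofreal_ne1 by auto
      then show ?case using False by (simp add: field_simps)
    qed
  qed
qed

lemma v_cont: "continuous_on {0..} (v_fun z)"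
  unfolding continuous_on_eq_continuous_within
proof
  fix x :: real assume "x \<in> {0..}"
  then consider "x = 0" | "x > 0" by fastforce
  then show "continuous (at x within {0..}) (v_fun z)"
  proof cases
    case 1
    have "v_fun z 0 = z" by (simp add: v_fun_def u_fun_def)
    have "(v_fun z \<longlongrightarrow> z) (at_right 0)"
    proof (rule Lim_transform_eventually[OF v_lim])
      show "\<forall>\<^sub>F y in at_right 0. (1 - exp (- (z * of_real y))) / (exp (of_real y) - 1) = v_fun z y"
        using eventually_at_right_less[of 0] by eventually_elim (simp add: v_ident)
    qed
    then show ?thesis using 1 \<open>v_fun z 0 = z\<close>
      by (simp add: continuous_within at_within_Ici_at_right)
  next
    case 2
    define g where "g = (\<lambda>y::real. (1 - exp (- (z * of_real y))) / (exp (of_real y) - 1))"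
    have "isCont g x" unfolding g_def
      using exp_ofreal_ne1[OF 2] by (auto intro!: continuous_intros)
    moreover have "\<forall>\<^sub>F y in nhds x. v_fun z y = g y"
    proof -
      have "\<forall>\<^sub>F y in nhds x. y \<in> {0<..}" using 2 by (intro eventually_nhds_in_open) auto
      then show ?thesis by eventually_elim (simp add: v_ident g_def)
    qed
    ultimately have "isCont (v_fun z) x" using isCont_cong by blast
    then show ?thesis by (rule continuous_at_imp_continuous_at_within)
  qed
qed

theorem lemma5p2:
  shows "(\<forall>z::complex. Re z > -1 \<longrightarrow>
            (\<forall>y::real. y > 0 \<longrightarrow> v_fun z y = (1 - exp (- (z * of_real y))) / (exp (of_real y) - 1))
          \<and> bounded (u_fun z ` {0..}) \<and> continuous_on {0..} (u_fun z)
          \<and> bounded (v_fun z ` {0..}) \<and> continuous_on {0..} (v_fun z))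
       \<and> (\<forall>a::real. a > -1 \<longrightarrow>
            (\<exists>C C1 C2 e1 e2 :: real. C > 0 \<and> C1 > 0 \<and> C2 > 0 \<and> e1 > 0 \<and> e2 > 0 \<and>
              (\<forall>z::complex. Re z = a \<longrightarrow>
                 (\<forall>y::real. y \<ge> 0 \<longrightarrow> norm (v_fun z y) \<le> C1 * norm z * exp (- e1 * y))
               \<and> (\<forall>x::real. x \<ge> C \<longrightarrow> norm (v_fun z x) \<le> C2 * exp (- e2 * x)))))"
proof (intro conjI allI impI)
  fix a :: real assume "a > -1"
  then show "\<exists>C C1 C2 e1 e2 :: real. C > 0 \<and> C1 > 0 \<and> C2 > 0 \<and> e1 > 0 \<and> e2 > 0 \<and>
              (\<forall>z::complex. Re z = a \<longrightarrow>
                 (\<forall>y::real. y \<ge> 0 \<longrightarrow> norm (v_fun z y) \<le> C1 * norm z * exp (- e1 * y))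
               \<and> (\<forall>x::real. x \<ge> C \<longrightarrow> norm (v_fun z x) \<le> C2 * exp (- e2 * x)))"
    by (rule part2)
next
  fix z :: complex and y :: real
  assume "y > 0"
  then show "v_fun z y = (1 - exp (- (z * of_real y))) / (exp (of_real y) - 1)" by (rule v_ident)
next
  fix z :: complex
  show "continuous_on {0..} (v_fun z)" by (rule v_cont)
  have ueq: "u_fun z = (\<lambda>y. z * exp (- of_real y) - v_fun z y)"
    by (simp add: v_fun_def fun_eq_iff)
  show "continuous_on {0..} (u_fun z)" unfolding ueq
    by (intro continuous_intros v_cont)
  assume "-1 < Re z"
  then have "\<exists>C C1 C2 e1 e2 :: real. C > 0 \<and> C1 > 0 \<and> C2 > 0 \<and> e1 > 0 \<and> e2 > 0 \<and>
              (\<forall>z'::complex. Re z' = Re z \<longrightarrow>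
                 (\<forall>y::real. y \<ge> 0 \<longrightarrow> norm (v_fun z' y) \<le> C1 * norm z' * exp (- e1 * y))
               \<and> (\<forall>x::real. x \<ge> C \<longrightarrow> norm (v_fun z' x) \<le> C2 * exp (- e2 * x)))"
    by (rule part2)
  then obtain C C1 C2 e1 e2 :: real where e1: "e1 > 0" and C1: "C1 > 0" and
    H: "\<forall>z'::complex. Re z' = Re z \<longrightarrow>
                 (\<forall>y::real. y \<ge> 0 \<longrightarrow> norm (v_fun z' y) \<le> C1 * norm z' * exp (- e1 * y))
               \<and> (\<forall>x::real. x \<ge> C \<longrightarrow> norm (v_fun z' x) \<le> C2 * exp (- e2 * x))"
    by (elim exE conjE)
  have B: "norm (v_fun z y) \<le> C1 * norm z * exp (- e1 * y)" if "y \<ge> 0" for y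
    using H that by blast
  have vb: "norm (v_fun z y) \<le> C1 * norm z" if "y \<ge> 0" for y
  proof -
    have "exp (- e1 * y) \<le> 1" using e1 that by simp
    then have "C1 * norm z * exp (- e1 * y) \<le> C1 * norm z"
      using B[OF that] C1 by (intro mult_left_le) auto
    then show ?thesis using B[OF that] by linarith
  qed
  show "bounded (v_fun z ` {0..})"
    unfolding bounded_iff using vb by auto
  have "norm (u_fun z y) \<le> norm z + C1 * norm z" if "y \<ge> 0" for y
  proof -
    have "norm (u_fun z y) \<le> norm (z * exp (- of_real y)) + norm (v_fun z y)"
      unfolding ueq by (rule norm_triangle_ineq4)
    moreover have "norm (z * exp (- complex_of_real y)) \<le> norm z"
      using that by (simp add: norm_mult norm_exp_eq_Re mult_left_le)
    ultimately show ?thesis using vb[OF that] by linarith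
  qed
  then show "bounded (u_fun z ` {0..})"
    unfolding bounded_iff by auto
qed

end
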